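(* For $\beta>2$ let $E_\beta(z)=\prod_{n=1}^\infty\Big(1-\frac{z}{n^\beta-i}\Big)$. Then there are constants $0<C_1\le C_2$ and $R>0$ such that $C_1|x|^{1/\beta}\le\log|E_\beta(x)|\le C_2|x|^{1/\beta}$ for all real $x$ with $|x|>R$. *)

theory Defs
  imports "HOL-Analysis.Analysis"
begin

definition E_beta :: "real \<Rightarrow> complex \<Rightarrow> complex" where
  "E_beta \<beta> z = (\<Prod>k. 1 - z / (complex_of_real (real (Suc k) powr \<beta>) - \<i>))"

end

theory Submission
  imports Defs
begin


lemma pow_step_up:
  fixes p t :: real
  assumes "p > 0" "t > 0"
  shows "(p+1) * t powr p \<le> (t+1) powr (p+1) - t powr (p+1)"
proof -
  have der: "\<And>x. t \<le> x \<Longrightarrow> x \<le> t+1 \<Longrightarrow> ((\<lambda>z. z powr (p+1)) has_real_derivative (p+1) * x powr (p+1-1)) (at x)"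
    using assms by (intro has_real_derivative_powr) auto
  obtain z where z: "t < z" "z < t+1" "(t+1) powr (p+1) - t powr (p+1) = (t+1-t) * ((p+1) * z powr (p+1-1))"
    using MVT2[of t "t+1", OF _ der] by auto
  have "t powr p \<le> z powr p" using z assms by (intro powr_mono2) auto
  then show ?thesis using z assms by simp
qed

lemma pow_step_down:
  fixes p t :: real
  assumes "p > 1" "t \<ge> 2"
  shows "(p-1) * t powr (-p) \<le> (t-1) powr (1-p) - t powr (1-p)"
proof -
  have der: "\<And>x. t-1 \<le> x \<Longrightarrow> x \<le> t \<Longrightarrow> ((\<lambda>z. z powr (1-p)) has_real_derivative (1-p) * x powr (1-p-1)) (at x)"
    using assms by (intro has_real_derivative_powr) auto
  obtain z where z: "t-1 < z" "z < t" "t powr (1-p) - (t-1) powr (1-p) = (t-(t-1)) * ((1-p) * z powr (1-p-1))"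
    using MVT2[of "t-1" t, OF _ der] by auto
  have "t powr (-p) \<le> z powr (-p)" using z assms by (intro powr_mono2') auto
  then have "(p-1) * t powr (-p) \<le> (p-1) * z powr (-p)" using assms by (intro mult_left_mono) auto
  then show ?thesis using z assms by (simp add: algebra_simps)
qed

lemma sum_up:
  fixes p :: real
  assumes "p > 0"
  shows "(\<Sum>n\<in>{1..j}. real n powr p) \<le> ((real j + 1) powr (p+1) - 1) / (p+1)"
proof (induction j)
  case 0
  then show ?case by simp
next
  case (Suc j)
  have "(p+1) * (real j + 1) powr p \<le> (real j + 1 + 1) powr (p+1) - (real j + 1) powr (p+1)"
    using pow_step_up[of p "real j + 1"] assms by simp
  then have "(real j + 1) powr p \<le> ((real j + 1 + 1) powr (p+1) - (real j + 1) powr (p+1)) / (p+1)"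
    using assms by (simp add: field_simps)
  then show ?case using Suc assms by (simp add: add.commute diff_divide_distrib)
qed

lemma sum_down:
  fixes p :: real
  assumes "p > 1" "a \<ge> 1" "M \<ge> a"
  shows "(\<Sum>n\<in>{a<..M}. real n powr (-p)) \<le> (real a powr (1-p) - real M powr (1-p)) / (p-1)"
  using assms(3)
proof (induction M rule: dec_induct)
  case base
  then show ?case by simp
next
  case (step M)
  have "(p-1) * (real M + 1) powr (-p) \<le> (real M + 1 - 1) powr (1-p) - (real M + 1) powr (1-p)"
    using pow_step_down[of p "real M + 1"] assms step by simp
  then have "(real M + 1) powr (-p) \<le> (real M powr (1-p) - (real M + 1) powr (1-p)) / (p-1)"
    using assms by (simp add: field_simps)
  moreover have "{a<..Suc M} = insert (Suc M) {a<..M}" using step by auto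
  ultimately show ?case using step assms by (simp add: add.commute diff_divide_distrib)
qed



lemma ln_sum_upper:
  "(\<Sum>n\<in>{1..j}. ln (real n)) \<le> (real j + 1) * ln (real j + 1) - real j"
proof (induction j)
  case 0
  then show ?case by simp
next
  case (Suc j)
  have y: "ln (1 / ((real j + 2) / (real j + 1))) \<le> 1 / ((real j + 2) / (real j + 1)) - 1"
    by (rule ln_le_minus_one) auto
  have "ln (1 / ((real j + 2) / (real j + 1))) = ln (real j + 1) - ln (real j + 2)"
    by (simp add: ln_div)
  moreover have "1 / ((real j + 2) / (real j + 1)) - 1 = - 1 / (real j + 2)"
    by (simp add: field_simps)
  ultimately have "ln (real j + 2) - ln (real j + 1) \<ge> 1 / (real j + 2)" using y by simp
  then have "(real j + 2) * (ln (real j + 2) - ln (real j + 1)) \<ge> 1"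
    by (simp add: field_simps)
  then show ?case using Suc by (simp add: algebra_simps)
qed

lemma ln_sum_lower:
  "(\<Sum>n\<in>{1..j}. ln (real n)) \<ge> real j * ln (real j) - real j"
proof (induction j)
  case 0
  then show ?case by simp
next
  case (Suc j)
  show ?case
  proof (cases "j = 0")
    case True
    then show ?thesis by simp
  next
    case False
    have "ln ((real j + 1) / real j) \<le> (real j + 1) / real j - 1"
      by (rule ln_le_minus_one) (use False in auto)
    moreover have "ln ((real j + 1) / real j) = ln (real j + 1) - ln (real j)"
      using False by (simp add: ln_div)
    moreover have "(real j + 1) / real j - 1 = 1 / real j" using False by (simp add: field_simps)
    ultimately have q: "real j * ln ((real j + 1) / real j) \<le> 1"
      using False by (simp add: field_simps)
    have e: "ln (real j + 1) = ln (real j) + ln ((real j + 1)/real j)"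
      using False by (simp add: ln_div)
    have "real j * ln (real j + 1) = real j * ln (real j) + real j * ln ((real j + 1)/real j)"
      by (simp only: e distrib_left)
    then show ?thesis using Suc q by (simp add: algebra_simps)
  qed
qed

lemma ser:
  fixes F :: "nat set" and z w :: "nat \<Rightarrow> real" and N :: real
  assumes "finite F" "\<forall>n\<in>F. 0 \<le> z n \<and> z n < 1"
    "\<forall>k\<ge>1. (\<Sum>n\<in>F. z n ^ k) \<le> N * w k" "summable (\<lambda>k. w k / real k)"
  shows "(\<Sum>n\<in>F. ln (1 - z n)) \<ge> - (N * (\<Sum>k. w k / real k))"
proof -
  have sm: "(\<lambda>k. z n ^ k / real k) sums (- ln (1 - z n))" if "n \<in> F" for n
  proof -
    have "\<bar>- z n\<bar> < 1" using assms(2) that by auto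
    from sums_minus[OF ln_series'[OF this]] show ?thesis by simp
  qed
  have A: "(\<Sum>n\<in>F. ln (1 - z n)) = - (\<Sum>n\<in>F. (\<Sum>k. z n ^ k / real k))"
    using sm by (simp add: sums_iff sum_negf)
  have "(\<Sum>n\<in>F. (\<Sum>k. z n ^ k / real k)) = (\<Sum>k. \<Sum>n\<in>F. z n ^ k / real k)"
    using sm by (subst suminf_sum) (auto simp: sums_iff)
  also have "\<dots> \<le> (\<Sum>k. N * (w k / real k))"
  proof (rule suminf_le)
    fix k
    show "(\<Sum>n\<in>F. z n ^ k / real k) \<le> N * (w k / real k)"
    proof (cases "k = 0")
      case True then show ?thesis by simp
    next
      case False
      then have "(\<Sum>n\<in>F. z n ^ k) \<le> N * w k" using assms(3) by auto
      then have "(\<Sum>n\<in>F. z n ^ k) / real k \<le> N * w k / real k"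
        by (intro divide_right_mono) auto
      then show ?thesis by (simp add: sum_divide_distrib)
    qed
  next
    show "summable (\<lambda>k. \<Sum>n\<in>F. z n ^ k / real k)"
      using sm by (intro summable_sum) (auto simp: sums_iff)
    show "summable (\<lambda>k. N * (w k / real k))"
      using assms(4) by (rule summable_mult)
  qed
  also have "\<dots> = N * (\<Sum>k. w k / real k)"
    using assms(4) by (rule suminf_mult)
  finally show ?thesis using A by simp
qed

lemma wk_alg:
  fixes \<beta> K :: real
  assumes "K > 0" "\<beta> * K > 1"
  shows "(1 / (\<beta> * K + 1) + 1 / (\<beta> * K - 1)) / K = 2*\<beta> / (\<beta>^2 * K^2 - 1)"
proof -
  have e: "\<beta>^2 * K^2 - 1 = (\<beta> * K - 1) * (\<beta> * K + 1)"
    by (simp add: algebra_simps power2_eq_square)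
  have p: "\<beta> * K - 1 > 0" "\<beta> * K + 1 > 0" using assms by auto
  have "1 / (\<beta> * K + 1) + 1 / (\<beta> * K - 1) = 2*\<beta>*K / ((\<beta> * K - 1) * (\<beta> * K + 1))"
    using p by (simp add: field_simps)
  then show ?thesis unfolding e using assms by simp
qed

lemma Dbound:
  fixes \<beta> :: real
  assumes b: "\<beta> > 2"
  defines "w \<equiv> (\<lambda>k::nat. 1 / (\<beta> * real k + 1) + 1 / (\<beta> * real k - 1))"
  shows "summable (\<lambda>k. w k / real k) \<and>
    (\<Sum>k. w k / real k) \<le> \<beta> - (2*\<beta>/3 - 2*\<beta>/(\<beta>^2 - 1))"
proof -
  define h where "h = (\<lambda>k::nat. \<beta> / (2 * real k + 1))"
  define \<delta> where "\<delta> = 2*\<beta>/3 - 2*\<beta>/(\<beta>^2 - 1)"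
  have hlim: "h \<longlonglongrightarrow> 0" unfolding h_def by real_asymp
  have tel: "(\<lambda>k. h k - h (Suc k)) sums (\<beta>)"
    using telescope_sums'[OF hlim] by (simp add: h_def)
  define v where "v = (\<lambda>k. (h k - h (Suc k)) - (if k = 0 then \<delta> else 0))"
  have vs: "v sums (\<beta> - \<delta>)"
    unfolding v_def by (intro sums_diff tel sums_single)
  have uk: "w (Suc k) / real (Suc k) = 2*\<beta> / (\<beta>^2 * (real k + 1)^2 - 1)" for k
  proof -
    have p1: "\<beta> * (real k + 1) - 1 > 0" using b by (smt (verit) mult_less_cancel_left2 of_nat_0_le_iff)
    have p2: "\<beta> * (real k + 1) + 1 > 0" using p1 by linarith
    have "w (Suc k) / real (Suc k) = (1 / (\<beta> * (real k + 1) + 1) + 1 / (\<beta> * (real k + 1) - 1)) / (real k + 1)"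
      unfolding w_def by (simp add: add.commute)
    also have "\<dots> = 2*\<beta> / (\<beta>^2 * (real k + 1)^2 - 1)"
      using p1 by (intro wk_alg) auto
    finally show ?thesis .
  qed
  have hk: "h k - h (Suc k) = 2*\<beta> / (4 * (real k + 1)^2 - 1)" for k
  proof -
    have "4 * (real k + 1)^2 - 1 = (2 * real k + 1) * (2 * real k + 3)"
      by (simp add: algebra_simps power2_eq_square)
    then show ?thesis unfolding h_def by (simp add: field_simps)
  qed
  have le: "w (Suc k) / real (Suc k) \<le> v k" for k
  proof -
    have "(real k + 1)^2 \<ge> 1" using one_le_power[of "real k + 1" 2] by simp
    then have A: "4 * (real k + 1)^2 - 1 > 0" by linarith
    have B: "4 * (real k + 1)^2 \<le> \<beta>^2 * (real k + 1)^2"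
    proof (intro mult_right_mono)
      have "2*2 \<le> \<beta>*\<beta>" using b by (intro mult_mono) auto
      then show "4 \<le> \<beta>^2" by (simp add: power2_eq_square)
    qed simp
    have C: "\<beta>^2 * (real k + 1)^2 - 1 > 0" using A B by linarith
    have "2*\<beta> / (\<beta>^2 * (real k + 1)^2 - 1) \<le> 2*\<beta> / (4 * (real k + 1)^2 - 1)"
      using b A B C by (intro divide_left_mono mult_pos_pos) auto
    moreover have "k = 0 \<Longrightarrow> 2*\<beta> / (\<beta>^2 * (real k + 1)^2 - 1) = h k - h (Suc k) - \<delta>"
      by (simp add: hk \<delta>_def)
    ultimately show ?thesis unfolding v_def uk hk by auto
  qed
  have nn: "0 \<le> w (Suc k) / real (Suc k)" for k
  proof -
    have k1: "(real k + 1)^2 \<ge> 1" using one_le_power[of "real k + 1" 2] by simp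
    have "2*2 \<le> \<beta>*\<beta>" using b by (intro mult_mono) auto
    then have b4: "4 \<le> \<beta>^2" by (simp add: power2_eq_square)
    have "4 * 1 \<le> \<beta>^2 * (real k + 1)^2" using k1 b4 by (intro mult_mono) auto
    then have "\<beta>^2 * (real k + 1)^2 \<ge> 4" by simp
    then show ?thesis unfolding uk using b by auto
  qed
  have su: "summable (\<lambda>k. w (Suc k) / real (Suc k))"
  proof (rule summable_comparison_test'[OF sums_summable[OF vs], of 0])
    fix n :: nat
    show "norm (w (Suc n) / real (Suc n)) \<le> v n"
      using le[of n] nn[of n] by (simp only: real_norm_def abs_of_nonneg)
  qed
  have "(\<Sum>k. w (Suc k) / real (Suc k)) \<le> \<beta> - \<delta>"
    using suminf_le[OF le su sums_summable[OF vs]] vs by (simp add: sums_iff)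
  moreover have s2: "summable (\<lambda>k. w k / real k)" using su by (subst summable_Suc_iff[symmetric])
  moreover have "(\<Sum>k. w k / real k) = (\<Sum>k. w (Suc k) / real (Suc k))"
    using suminf_split_head[OF s2] by simp
  ultimately show ?thesis unfolding \<delta>_def by simp
qed



definition gt :: "real \<Rightarrow> real \<Rightarrow> nat \<Rightarrow> real" where
  "gt \<beta> x n = ln (sqrt ((real n powr \<beta> - x)^2 + 1)) - ln (sqrt ((real n powr \<beta>)^2 + 1))"

lemma cmod_factor:
  fixes a x :: real
  shows "cmod (1 - complex_of_real x / (complex_of_real a - \<i>)) = sqrt ((a - x)^2 + 1) / sqrt (a^2 + 1)"
proof -
  have nz: "complex_of_real a - \<i> \<noteq> 0" by (simp add: complex_eq_iff)
  have "1 - complex_of_real x / (complex_of_real a - \<i>) = Complex (a - x) (-1) / Complex a (-1)"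
    using nz by (simp add: field_simps complex_eq_iff Complex_eq)
  also have "cmod \<dots> = sqrt ((a - x)^2 + 1) / sqrt (a^2 + 1)"
    by (subst norm_divide) (simp add: cmod_def)
  finally show ?thesis .
qed

lemma E_sums:
  fixes \<beta> x :: real
  assumes b: "\<beta> > 2"
  shows "(\<lambda>k. gt \<beta> x (Suc k)) sums ln (cmod (E_beta \<beta> (complex_of_real x)))"
proof -
  define f where "f = (\<lambda>k. 1 - complex_of_real x / (complex_of_real (real (Suc k) powr \<beta>) - \<i>))"
  have cf: "cmod (f k) = sqrt ((real (Suc k) powr \<beta> - x)^2 + 1) / sqrt ((real (Suc k) powr \<beta>)^2 + 1)" for k
    unfolding f_def by (rule cmod_factor)
  have pos: "cmod (f k) > 0" for k
    unfolding cf by (intro divide_pos_pos) (auto intro: add_nonneg_pos)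
  have bnd: "norm (f k - 1) \<le> \<bar>x\<bar> * real (Suc k) powr (-\<beta>)" for k
  proof -
    define a where "a = real (Suc k) powr \<beta>"
    have a1: "a \<ge> 1" unfolding a_def using b by (intro ge_one_powr_ge_zero) auto
    have "cmod (complex_of_real a - \<i>) \<ge> a"
      using complex_Re_le_cmod[of "complex_of_real a - \<i>"] by simp
    then have "norm (f k - 1) = \<bar>x\<bar> / cmod (complex_of_real a - \<i>)"
      unfolding f_def a_def[symmetric] by (simp add: norm_divide)
    also have "\<dots> \<le> \<bar>x\<bar> / a"
      using \<open>cmod (complex_of_real a - \<i>) \<ge> a\<close> a1 by (intro divide_left_mono mult_pos_pos) auto
    also have "\<dots> = \<bar>x\<bar> * real (Suc k) powr (-\<beta>)"
      unfolding a_def by (simp add: powr_minus divide_inverse)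
    finally show ?thesis .
  qed
  have s0: "summable (\<lambda>n. real n powr (-\<beta>))" using b by (subst summable_real_powr_iff) auto
  have s1: "summable (\<lambda>k. \<bar>x\<bar> * real (Suc k) powr (-\<beta>))"
    using s0 by (intro summable_mult) (subst summable_Suc_iff)
  have "summable (\<lambda>k. norm (f k - 1))"
    by (rule summable_comparison_test'[OF s1, of 0]) (use bnd in auto)
  then have "abs_convergent_prod f" by (rule summable_imp_abs_convergent_prod)
  then have "convergent_prod f" by (rule abs_convergent_prod_imp_convergent_prod)
  then have "f has_prod (prodinf f)" by (rule convergent_prod_has_prod)
  then have "(\<lambda>k. cmod (f k)) has_prod cmod (prodinf f)" by (rule has_prod_norm)
  from has_prod_imp_sums_ln_real'[OF this pos]
  have "(\<lambda>k. ln (cmod (f k))) sums ln (cmod (prodinf f))" .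
  moreover have "prodinf f = E_beta \<beta> (complex_of_real x)" unfolding f_def E_beta_def by simp
  moreover have "ln (cmod (f k)) = gt \<beta> x (Suc k)" for k
  proof -
    have sq1: "\<And>u::real. u^2 + 1 \<noteq> 0" by (smt (verit) zero_le_power2)
    show ?thesis unfolding cf gt_def by (subst ln_div) (auto simp: sq1)
  qed
  ultimately show ?thesis by simp
qed



lemma lsq_lower: fixes u :: real assumes "u \<noteq> 0" shows "ln (sqrt (u^2 + 1)) \<ge> ln \<bar>u\<bar>"
proof -
  have "sqrt (u^2) \<le> sqrt (u^2 + 1)" by (rule real_sqrt_le_mono) simp
  then have le: "\<bar>u\<bar> \<le> sqrt (u^2 + 1)" by simp
  have p: "sqrt (u^2 + 1) > 0" by (intro real_sqrt_gt_zero add_nonneg_pos) auto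
  show ?thesis using le p assms by (subst ln_le_cancel_iff) auto
qed

lemma lsq_nonneg: fixes u :: real shows "ln (sqrt (u^2 + 1)) \<ge> 0"
  by simp

lemma lsq_upper: fixes a :: real assumes "a > 0" shows "ln (sqrt (a^2 + 1)) \<le> ln a + 1 / (2 * a^2)"
proof -
  have a2: "a^2 > 0" using assms by simp
  have "a^2 + 1 = a^2 * (1 + 1/a^2)" using a2 by (simp add: field_simps)
  moreover have "1 + 1/a^2 > 0" using a2 by (simp add: add_pos_pos)
  ultimately have "ln (a^2 + 1) = ln (a^2) + ln (1 + 1/a^2)" using a2 by (simp add: ln_mult)
  also have "ln (1 + 1/a^2) \<le> 1/a^2" using a2 by (intro ln_add_one_self_le_self) auto
  finally have "ln (a^2 + 1) \<le> 2 * ln a + 1/a^2" using assms by (simp add: ln_realpow)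
  moreover have "ln (sqrt (a^2 + 1)) = ln (a^2 + 1) / 2"
    by (simp add: ln_sqrt add_pos_nonneg)
  ultimately show ?thesis by (simp add: field_simps)
qed

lemma lsq_upper2: fixes a :: real assumes "a \<ge> 0" shows "ln (sqrt (a^2 + 1)) \<le> ln (a + 1)"
proof -
  have "sqrt (a^2 + 1) \<le> sqrt ((a+1)^2)" using assms by (intro real_sqrt_le_mono) (simp add: power2_eq_square algebra_simps)
  then have le: "sqrt (a^2 + 1) \<le> a + 1" using assms by simp
  have p: "sqrt (a^2 + 1) > 0" by (intro real_sqrt_gt_zero add_nonneg_pos) auto
  show ?thesis using le p assms by (subst ln_le_cancel_iff) auto
qed

lemma gt_upper:
  fixes a x :: real
  assumes "a > 0"
  shows "ln (sqrt ((a - x)^2 + 1)) - ln (sqrt (a^2 + 1)) \<le> ln (1 + \<bar>x\<bar> / a)"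
proof -
  define s where "s = \<bar>x\<bar>"
  have s0: "s \<ge> 0" unfolding s_def by simp
  have "\<bar>a - x\<bar> \<le> a + s" unfolding s_def using assms by auto
  then have "\<bar>a - x\<bar>^2 \<le> (a + s)^2" by (rule power_mono) simp
  then have "(a - x)^2 \<le> (a + s)^2" by simp
  then have h1: "(a - x)^2 + 1 \<le> (a + s)^2 + 1" by simp
  have h2: "(a + s)^2 + 1 \<le> (1 + s/a)^2 * (a^2 + 1)"
  proof -
    have "(1 + s/a)^2 * (a^2 + 1) = (a + s)^2 + (1 + s/a)^2"
      using assms by (simp add: field_simps power2_eq_square)
    moreover have "(1 + s/a)^2 \<ge> 1" using s0 assms by (simp add: one_le_power)
    ultimately show ?thesis by simp
  qed
  have "sqrt ((a - x)^2 + 1) \<le> sqrt ((1 + s/a)^2 * (a^2 + 1))"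
    using h1 h2 by (intro real_sqrt_le_mono) linarith
  also have "\<dots> = (1 + s/a) * sqrt (a^2 + 1)"
    using s0 assms by (simp add: real_sqrt_mult)
  finally have le: "sqrt ((a - x)^2 + 1) \<le> (1 + s/a) * sqrt (a^2 + 1)" .
  have p1: "sqrt ((a - x)^2 + 1) > 0" by (intro real_sqrt_gt_zero add_nonneg_pos) auto
  have p2: "sqrt (a^2 + 1) > 0" by (intro real_sqrt_gt_zero add_nonneg_pos) auto
  have p3: "1 + s/a > 0" using s0 assms by (simp add: add_pos_nonneg)
  have "ln (sqrt ((a - x)^2 + 1)) \<le> ln ((1 + s/a) * sqrt (a^2 + 1))"
    using le p1 p2 p3 by (subst ln_le_cancel_iff) auto
  also have "\<dots> = ln (1 + s/a) + ln (sqrt (a^2 + 1))"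
    using p2 p3 by (simp add: ln_mult)
  finally show ?thesis unfolding s_def by simp
qed

lemma ev_lin_log:
  fixes c A B :: real
  assumes "c > 0"
  shows "\<exists>N0>0. \<forall>N\<ge>N0. A + B * ln N \<le> c * N"
proof -
  define N0 where "N0 = max 1 (max (2*\<bar>A\<bar>/c) ((4*\<bar>B\<bar>/c)^2))"
  have "\<forall>N\<ge>N0. A + B * ln N \<le> c * N"
  proof (intro allI impI)
    fix N assume N: "N \<ge> N0"
    then have N1: "N \<ge> 1" unfolding N0_def by simp
    have "ln (sqrt N) \<le> sqrt N - 1" using N1 by (intro ln_le_minus_one) auto
    then have lnN: "ln N \<le> 2 * sqrt N" using N1 by (simp add: ln_sqrt)
    have lnN0: "ln N \<ge> 0" using N1 by simp
    have "(4*\<bar>B\<bar>/c)^2 \<le> N" using N unfolding N0_def by simp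
    then have "sqrt ((4*\<bar>B\<bar>/c)^2) \<le> sqrt N" by (rule real_sqrt_le_mono)
    then have "4*\<bar>B\<bar>/c \<le> sqrt N" using assms by simp
    then have "4*\<bar>B\<bar> \<le> c * sqrt N" using assms by (simp add: field_simps)
    then have "4*\<bar>B\<bar> * sqrt N \<le> c * sqrt N * sqrt N"
      by (rule mult_right_mono) (use N1 in simp)
    also have "c * sqrt N * sqrt N = c * N"
    proof -
      have "0 \<le> N" using N1 by linarith
      then show ?thesis by (simp add: mult.assoc)
    qed
    finally have "2*\<bar>B\<bar> * sqrt N \<le> c * N / 2" by simp
    moreover have "B * ln N \<le> \<bar>B\<bar> * ln N" using lnN0 by (intro mult_right_mono) auto
    moreover have "\<bar>B\<bar> * ln N \<le> \<bar>B\<bar> * (2 * sqrt N)" using lnN by (intro mult_left_mono) auto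
    moreover have "A \<le> c * N / 2"
    proof -
      have "\<bar>A\<bar> * 2 \<le> N * c" using N assms unfolding N0_def by (simp add: field_simps)
      moreover have "N * c = c * N" by simp
      ultimately show ?thesis using abs_ge_self[of A] by linarith
    qed
    ultimately show "A + B * ln N \<le> c * N" by linarith
  qed
  moreover have "N0 > 0" unfolding N0_def by simp
  ultimately show ?thesis by blast
qed



lemma F1_pow:
  fixes p N :: real and m :: nat
  assumes "p > 0" "m \<ge> 1" "real m \<le> N"
  shows "(\<Sum>n\<in>{1..m-1}. (real n / N) powr p) \<le> N / (p+1)"
proof -
  have N0: "N > 0" using assms by simp
  have "(\<Sum>n\<in>{1..m-1}. (real n / N) powr p) = (\<Sum>n\<in>{1..m-1}. real n powr p) / N powr p"
    by (simp add: powr_divide sum_divide_distrib)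
  also have "(\<Sum>n\<in>{1..m-1}. real n powr p) \<le> ((real (m-1) + 1) powr (p+1) - 1) / (p+1)"
    by (rule sum_up) fact
  also have "real (m-1) + 1 = real m" using assms by simp
  also have "(real m powr (p+1) - 1) / (p+1) \<le> N powr (p+1) / (p+1)"
  proof -
    have "real m powr (p+1) \<le> N powr (p+1)" using assms by (intro powr_mono2) auto
    then show ?thesis using assms by (intro divide_right_mono) auto
  qed
  finally have "(\<Sum>n\<in>{1..m-1}. (real n / N) powr p) \<le> N powr (p+1) / (p+1) / N powr p"
    using N0 by (simp add: divide_right_mono)
  also have "N powr (p+1) / (p+1) / N powr p = N / (p+1)"
    using N0 by (simp add: powr_add)
  finally show ?thesis .
qed

lemma F2_pow:
  fixes p N :: real and m M :: nat
  assumes "p > 1" "N > 0" "N \<le> real m + 1"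
  shows "(\<Sum>n\<in>{Suc m<..M}. (N / real n) powr p) \<le> N / (p-1)"
proof (cases "M \<ge> Suc m")
  case False
  then have "{Suc m<..M} = {}" by auto
  then show ?thesis using assms by simp
next
  case True
  have "(\<Sum>n\<in>{Suc m<..M}. (N / real n) powr p) = N powr p * (\<Sum>n\<in>{Suc m<..M}. real n powr (-p))"
    unfolding sum_distrib_left by (rule sum.cong) (simp_all only: powr_divide powr_minus_divide, simp)
  also have "(\<Sum>n\<in>{Suc m<..M}. real n powr (-p)) \<le> (real (Suc m) powr (1-p) - real M powr (1-p)) / (p-1)"
    by (rule sum_down) (use assms True in auto)
  also have "\<dots> \<le> real (Suc m) powr (1-p) / (p-1)"
    using assms by (intro divide_right_mono) auto
  also have "\<dots> \<le> N powr (1-p) / (p-1)"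
    using assms by (intro divide_right_mono powr_mono2') auto
  finally have "(\<Sum>n\<in>{Suc m<..M}. (N / real n) powr p) \<le> N powr p * (N powr (1-p) / (p-1))"
    by (simp add: mult_left_mono)
  also have "\<dots> = N / (p-1)"
    using assms by (simp add: powr_add[symmetric])
  finally show ?thesis .
qed

lemma zpow:
  fixes y \<beta> :: real assumes "y > 0"
  shows "(y powr \<beta>)^k = y powr (\<beta> * real k)"
proof -
  have "(y powr \<beta>) powr (real k) = (y powr \<beta>)^k" using assms by (intro powr_realpow) simp
  then show ?thesis by (simp add: powr_powr)
qed

lemma recip_sq:
  fixes \<beta> :: real
  assumes "\<beta> > 2"
  shows "(\<Sum>n\<in>{1..M}. 1 / (2 * (real n powr \<beta>)^2)) \<le> 1"
proof (cases "M \<ge> 1")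
  case False
  then show ?thesis by simp
next
  case True
  have e: "1 / (2 * (real n powr \<beta>)^2) = real n powr (-(2*\<beta>)) / 2" if "n \<ge> 1" for n
  proof -
    have "(real n powr \<beta>)^2 = real n powr (\<beta> * real 2)"
      using that by (intro zpow) simp
    then have "(real n powr \<beta>)^2 = real n powr (2*\<beta>)" by (simp add: mult.commute)
    moreover have "real n powr (-(2*\<beta>)) = 1 / real n powr (2*\<beta>)"
      by (rule powr_minus_divide)
    ultimately show ?thesis by simp
  qed
  have "{1..M} = insert 1 {1<..M}" using True by auto
  then have "(\<Sum>n\<in>{1..M}. real n powr (-(2*\<beta>))) = 1 + (\<Sum>n\<in>{1<..M}. real n powr (-(2*\<beta>)))"
    by simp
  also have "(\<Sum>n\<in>{1<..M}. real n powr (-(2*\<beta>))) \<le> (real 1 powr (1-2*\<beta>) - real M powr (1-2*\<beta>)) / (2*\<beta>-1)"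
    by (rule sum_down) (use assms True in auto)
  also have "\<dots> \<le> 1 / (2*\<beta>-1)"
    using assms by (intro divide_right_mono) auto
  also have "\<dots> \<le> 1" using assms by simp
  finally have "(\<Sum>n\<in>{1..M}. real n powr (-(2*\<beta>))) \<le> 2" by simp
  moreover have "(\<Sum>n\<in>{1..M}. 1 / (2 * (real n powr \<beta>)^2)) = (\<Sum>n\<in>{1..M}. real n powr (-(2*\<beta>))) / 2"
    by (simp add: e sum_divide_distrib)
  ultimately show ?thesis by simp
qed



lemma floor_facts:
  fixes S :: real
  assumes "S \<ge> 1"
  shows "nat \<lfloor>S\<rfloor> \<ge> 1" "real (nat \<lfloor>S\<rfloor>) \<le> S" "S < real (nat \<lfloor>S\<rfloor>) + 1"
proof -
  have e: "real (nat \<lfloor>S\<rfloor>) = real_of_int \<lfloor>S\<rfloor>" using assms by simp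
  show "nat \<lfloor>S\<rfloor> \<ge> 1" using assms by (simp add: le_nat_iff le_floor_iff)
  show "real (nat \<lfloor>S\<rfloor>) \<le> S" unfolding e by (rule of_int_floor_le)
  show "S < real (nat \<lfloor>S\<rfloor>) + 1" unfolding e by (rule real_of_int_floor_add_one_gt)
qed

lemma ln_a: "n \<ge> 1 \<Longrightarrow> ln (real n powr \<beta>) = \<beta> * ln (real n)"
  by simp

lemma upper_est:
  fixes \<beta> x :: real
  assumes b: "\<beta> > 2" and s: "\<bar>x\<bar> \<ge> 1"
  shows "(\<Sum>n\<in>{1..M}. gt \<beta> x n) \<le> (ln 2 + \<beta> + 2 powr (\<beta>-1)/(\<beta>-1)) * \<bar>x\<bar> powr (1/\<beta>)"
proof -
  define S where "S = \<bar>x\<bar> powr (1/\<beta>)"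
  have S1: "S \<ge> 1" unfolding S_def using s b by (intro ge_one_powr_ge_zero) auto
  have Sb: "S powr \<beta> = \<bar>x\<bar>" unfolding S_def using b by (simp add: powr_powr)
  define m where "m = nat \<lfloor>S\<rfloor>"
  have m1: "m \<ge> 1" and mS: "real m \<le> S" and Sm: "S < real m + 1"
    using floor_facts[OF S1] unfolding m_def by auto
  define \<phi> where "\<phi> = (\<lambda>n::nat. ln (1 + \<bar>x\<bar> / real n powr \<beta>))"
  have \<phi>0: "\<phi> n \<ge> 0" for n unfolding \<phi>_def by simp
  have "(\<Sum>n\<in>{1..M}. gt \<beta> x n) \<le> (\<Sum>n\<in>{1..M}. \<phi> n)"
  proof (rule sum_mono)
    fix n assume "n \<in> {1..M}"
    then have "real n powr \<beta> > 0" by simp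
    then show "gt \<beta> x n \<le> \<phi> n" unfolding gt_def \<phi>_def by (rule gt_upper)
  qed
  also have "(\<Sum>n\<in>{1..M}. \<phi> n) \<le> (\<Sum>n\<in>{1..m} \<union> {m<..M}. \<phi> n)"
    by (rule sum_mono2) (auto simp: \<phi>0)
  also have "\<dots> = (\<Sum>n\<in>{1..m}. \<phi> n) + (\<Sum>n\<in>{m<..M}. \<phi> n)"
    by (rule sum.union_disjoint) auto
  also have "(\<Sum>n\<in>{1..m}. \<phi> n) \<le> S * ln 2 + \<beta> * S"
  proof -
    have "(\<Sum>n\<in>{1..m}. \<phi> n) \<le> (\<Sum>n\<in>{1..m}. ln 2 + \<beta> * ln S - \<beta> * ln (real n))"
    proof (rule sum_mono)
      fix n assume n: "n \<in> {1..m}"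
      define a where "a = real n powr \<beta>"
      have a0: "a > 0" using n unfolding a_def by simp
      have "a \<le> real m powr \<beta>" unfolding a_def using n b by (intro powr_mono2) auto
      also have "\<dots> \<le> S powr \<beta>" using mS b by (intro powr_mono2) auto
      finally have ax: "a \<le> \<bar>x\<bar>" using Sb by simp
      have u1: "\<bar>x\<bar> / a \<ge> 1" using ax a0 by simp
      have "\<phi> n = ln (1 + \<bar>x\<bar> / a)" unfolding \<phi>_def a_def by simp
      also have "\<dots> \<le> ln (2 * (\<bar>x\<bar> / a))" using u1 by simp
      also have "\<dots> = ln 2 + ln \<bar>x\<bar> - ln a" proof -
        have "\<bar>x\<bar> > 0" using s by linarith
        then show ?thesis using a0 by (simp add: ln_mult ln_div)
      qed
      also have "ln \<bar>x\<bar> = \<beta> * ln S" using Sb by (metis ln_powr)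
      also have "ln a = \<beta> * ln (real n)" unfolding a_def by simp
      finally show "\<phi> n \<le> ln 2 + \<beta> * ln S - \<beta> * ln (real n)" .
    qed
    also have "\<dots> = real m * ln 2 + real m * \<beta> * ln S - \<beta> * (\<Sum>n\<in>{1..m}. ln (real n))"
      by (simp add: sum.distrib sum_subtractf sum_distrib_left algebra_simps)
    also have "\<dots> \<le> real m * ln 2 + real m * \<beta> * ln S - \<beta> * (real m * ln (real m) - real m)"
      using ln_sum_lower[of m] b by (simp add: mult_left_mono)
    also have "\<dots> \<le> S * ln 2 + \<beta> * S"
    proof -
      have m0: "real m > 0" using m1 by simp
      have "ln (S / real m) \<le> S / real m - 1" using m0 S1 by (intro ln_le_minus_one) auto
      then have "ln S - ln (real m) \<le> S / real m - 1" using m0 S1 by (simp add: ln_div)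
      then have "real m * (ln S - ln (real m)) \<le> real m * (S / real m - 1)"
        using m0 by (intro mult_left_mono) auto
      moreover have "real m * (S / real m - 1) = S - real m" using m0 by (simp add: field_simps)
      ultimately have "real m * (ln S - ln (real m)) \<le> S - real m" by simp
      then have A: "\<beta> * (real m * (ln S - ln (real m))) \<le> \<beta> * (S - real m)"
        using b by (intro mult_left_mono) auto
      have B: "real m * ln 2 \<le> S * ln 2" using mS by (intro mult_right_mono) auto
      have "real m * ln 2 + real m * \<beta> * ln S - \<beta> * (real m * ln (real m) - real m) = real m * ln 2 + \<beta> * (real m * (ln S - ln (real m))) + \<beta> * real m"
        by (simp add: algebra_simps)
      moreover have "\<beta> * (S - real m) + \<beta> * real m = \<beta> * S" by (simp add: algebra_simps)
      ultimately show ?thesis using A B by linarith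
    qed
    finally show ?thesis .
  qed
  also have "(\<Sum>n\<in>{m<..M}. \<phi> n) \<le> 2 powr (\<beta>-1) / (\<beta>-1) * S"
  proof -
    have "(\<Sum>n\<in>{m<..M}. \<phi> n) \<le> (\<Sum>n\<in>{m<..M}. \<bar>x\<bar> * real n powr (-\<beta>))"
    proof (rule sum_mono)
      fix n assume n: "n \<in> {m<..M}"
      have "\<phi> n \<le> \<bar>x\<bar> / real n powr \<beta>" unfolding \<phi>_def by (intro ln_add_one_self_le_self) simp
      also have "\<dots> = \<bar>x\<bar> * real n powr (-\<beta>)" by (simp add: powr_minus_divide)
      finally show "\<phi> n \<le> \<bar>x\<bar> * real n powr (-\<beta>)" .
    qed
    also have "\<dots> = \<bar>x\<bar> * (\<Sum>n\<in>{m<..M}. real n powr (-\<beta>))" by (simp add: sum_distrib_left)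
    also have "(\<Sum>n\<in>{m<..M}. real n powr (-\<beta>)) \<le> real m powr (1-\<beta>) / (\<beta>-1)"
    proof (cases "M \<ge> m")
      case True
      have "(\<Sum>n\<in>{m<..M}. real n powr (-\<beta>)) \<le> (real m powr (1-\<beta>) - real M powr (1-\<beta>)) / (\<beta>-1)"
        by (rule sum_down) (use b m1 True in auto)
      also have "\<dots> \<le> real m powr (1-\<beta>) / (\<beta>-1)" using b by (intro divide_right_mono) auto
      finally show ?thesis .
    next
      case False
      then have "{m<..M} = {}" by auto
      then show ?thesis using b by simp
    qed
    also have "real m powr (1-\<beta>) \<le> (S/2) powr (1-\<beta>)"
    proof -
      have "real m \<ge> 1" using m1 by simp
      then have "S/2 \<le> real m" using Sm by linarith
      then show ?thesis using b S1 by (intro powr_mono2') auto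
    qed
    also have "(S/2) powr (1-\<beta>) = S powr (1-\<beta>) * 2 powr (\<beta>-1)"
    proof -
      have "2 powr (1-\<beta>) = 1 / 2 powr (\<beta>-1)" using powr_minus_divide[of 2 "\<beta>-1"] by simp
      then show ?thesis by (simp add: powr_divide)
    qed
    finally have "(\<Sum>n\<in>{m<..M}. \<phi> n) \<le> \<bar>x\<bar> * (S powr (1-\<beta>) * 2 powr (\<beta>-1) / (\<beta>-1))"
      using b by (simp add: divide_right_mono mult_left_mono)
    also have "\<bar>x\<bar> * S powr (1-\<beta>) = S"
    proof -
      have "\<bar>x\<bar> * S powr (1-\<beta>) = S powr \<beta> * S powr (1-\<beta>)" by (simp add: Sb)
      also have "\<dots> = S powr (\<beta> + (1-\<beta>))" by (rule powr_add[symmetric])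
      finally show ?thesis using S1 by simp
    qed
    then have "\<bar>x\<bar> * (S powr (1-\<beta>) * 2 powr (\<beta>-1) / (\<beta>-1)) = 2 powr (\<beta>-1) / (\<beta>-1) * S"
      by (simp add: field_simps)
    finally show ?thesis .
  qed
  finally show ?thesis unfolding S_def by (simp add: algebra_simps)
qed



lemma lower_neg:
  fixes \<beta> t :: real
  assumes b: "\<beta> > 2" and t: "t \<ge> 1" and M: "M \<ge> nat \<lfloor>t powr (1/\<beta>)\<rfloor>"
  shows "(\<Sum>n\<in>{1..M}. gt \<beta> (-t) n) \<ge> real (nat \<lfloor>t powr (1/\<beta>)\<rfloor>) * ln 2 - 1"
proof -
  define T where "T = t powr (1/\<beta>)"
  have T1: "T \<ge> 1" unfolding T_def using t b by (intro ge_one_powr_ge_zero) auto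
  have Tb: "T powr \<beta> = t" unfolding T_def using b t by (simp add: powr_powr)
  define m where "m = nat \<lfloor>T\<rfloor>"
  have mT: "real m \<le> T" using floor_facts[OF T1] unfolding m_def by auto
  define \<psi> where "\<psi> = (\<lambda>n::nat. ln (real n powr \<beta> + t) - ln (real n powr \<beta>))"
  have gl: "gt \<beta> (-t) n \<ge> \<psi> n - 1 / (2 * (real n powr \<beta>)^2)" if "n \<ge> 1" for n
  proof -
    define a where "a = real n powr \<beta>"
    have a0: "a > 0" unfolding a_def using that by simp
    have "ln (sqrt ((a + t)^2 + 1)) \<ge> ln \<bar>a + t\<bar>" using a0 t by (intro lsq_lower) auto
    moreover have "\<bar>a + t\<bar> = a + t" using a0 t by simp
    moreover have "ln (sqrt (a^2 + 1)) \<le> ln a + 1 / (2 * a^2)" using a0 by (rule lsq_upper)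
    ultimately show ?thesis unfolding gt_def \<psi>_def a_def[symmetric] by simp
  qed
  have \<psi>0: "\<psi> n \<ge> 0" if "n \<ge> 1" for n
  proof -
    have p: "real n powr \<beta> > 0" using that by simp
    have p2: "real n powr \<beta> + t > 0" using p t by linarith
    have "ln (real n powr \<beta>) \<le> ln (real n powr \<beta> + t)" using t p p2 by (subst ln_le_cancel_iff) auto
    then show ?thesis unfolding \<psi>_def by simp
  qed
  have \<psi>2: "\<psi> n \<ge> ln 2" if "n \<ge> 1" "n \<le> m" for n
  proof -
    define a where "a = real n powr \<beta>"
    have a0: "a > 0" unfolding a_def using that by simp
    have "a \<le> T powr \<beta>" unfolding a_def using that mT b by (intro powr_mono2) auto
    then have "2 * a \<le> a + t" using Tb by simp
    then have "ln (2 * a) \<le> ln (a + t)" using a0 by simp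
    moreover have "ln (2 * a) = ln 2 + ln a" using a0 by (simp add: ln_mult)
    ultimately show ?thesis unfolding \<psi>_def a_def[symmetric] by simp
  qed
  have "(\<Sum>n\<in>{1..M}. gt \<beta> (-t) n) \<ge> (\<Sum>n\<in>{1..M}. \<psi> n - 1 / (2 * (real n powr \<beta>)^2))"
    by (rule sum_mono) (use gl in auto)
  moreover have "(\<Sum>n\<in>{1..M}. \<psi> n - 1 / (2 * (real n powr \<beta>)^2)) = (\<Sum>n\<in>{1..M}. \<psi> n) - (\<Sum>n\<in>{1..M}. 1 / (2 * (real n powr \<beta>)^2))"
    by (rule sum_subtractf)
  moreover have "(\<Sum>n\<in>{1..M}. 1 / (2 * (real n powr \<beta>)^2)) \<le> 1" using b by (rule recip_sq)
  moreover have "(\<Sum>n\<in>{1..M}. \<psi> n) \<ge> (\<Sum>n\<in>{1..m}. \<psi> n)"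
    by (rule sum_mono2) (use M \<psi>0 in \<open>auto simp: m_def T_def\<close>)
  moreover have "(\<Sum>n\<in>{1..m}. \<psi> n) \<ge> (\<Sum>n\<in>{1..m}. ln 2)"
    by (rule sum_mono) (use \<psi>2 in auto)
  moreover have "(\<Sum>n\<in>{1..m}. (ln 2::real)) = real m * ln 2" by simp
  ultimately show ?thesis unfolding m_def T_def by linarith
qed



lemma lower_pos:
  fixes \<beta> x :: real
  assumes b: "\<beta> > 2" and x: "x > 0" and N2: "x powr (1/\<beta>) \<ge> 2"
    and M: "M \<ge> Suc (nat \<lfloor>x powr (1/\<beta>)\<rfloor>)"
  defines "w \<equiv> (\<lambda>k::nat. 1 / (\<beta> * real k + 1) + 1 / (\<beta> * real k - 1))"
  shows "(\<Sum>n\<in>{1..M}. gt \<beta> x n) \<ge> \<beta> * (x powr (1/\<beta>) - 2 - ln (x powr (1/\<beta>)))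
     - x powr (1/\<beta>) * (\<Sum>k. w k / real k) - 1 - 2 * ln (2 powr \<beta> * x + 1)"
proof -
  define N where "N = x powr (1/\<beta>)"
  have N2': "N \<ge> 2" using N2 unfolding N_def .
  have N0: "N > 0" using N2' by simp
  have Nb: "N powr \<beta> = x" unfolding N_def using b x by (simp add: powr_powr)
  define m where "m = nat \<lfloor>N\<rfloor>"
  have m1: "m \<ge> 1" and mN: "real m \<le> N" and Nm: "N < real m + 1"
    using floor_facts[of N] N2' unfolding m_def by auto
  have M': "M \<ge> Suc m" using M unfolding m_def N_def .
  define D where "D = (\<Sum>k. w k / real k)"
  define g where "g = gt \<beta> x"
  define F1 where "F1 = {1..m-1}"
  define F2 where "F2 = {Suc m<..M}"
  define F where "F = F1 \<union> F2"
  have finF: "finite F" unfolding F_def F1_def F2_def by simp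
  have disj: "F1 \<inter> F2 = {}" unfolding F1_def F2_def by auto
  have dec: "{1..M} - {m, Suc m} = F" unfolding F_def F1_def F2_def using m1 M' by auto
  have sub: "{m, Suc m} \<subseteq> {1..M}" using m1 M' by auto
  have split: "(\<Sum>n\<in>{1..M}. g n) = (\<Sum>n\<in>F. g n) + g m + g (Suc m)"
    using sum.subset_diff[OF sub, of g] dec by simp
  have mid: "g n \<ge> - ln (2 powr \<beta> * x + 1)" if "n \<in> {m, Suc m}" for n
  proof -
    define a where "a = real n powr \<beta>"
    have a0: "a \<ge> 0" unfolding a_def by simp
    have "real n \<le> 2 * N" using that mN N2' by auto
    then have "a \<le> (2 * N) powr \<beta>" unfolding a_def using b by (intro powr_mono2) auto
    also have "(2 * N) powr \<beta> = 2 powr \<beta> * x" using N0 Nb by (simp add: powr_mult)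
    finally have ax: "a \<le> 2 powr \<beta> * x" .
    have "ln (sqrt (a^2 + 1)) \<le> ln (a + 1)" using a0 by (rule lsq_upper2)
    also have "\<dots> \<le> ln (2 powr \<beta> * x + 1)" using ax a0 by simp
    finally have "ln (sqrt (a^2 + 1)) \<le> ln (2 powr \<beta> * x + 1)" .
    moreover have "ln (sqrt ((a - x)^2 + 1)) \<ge> 0" by (rule lsq_nonneg)
    ultimately show ?thesis unfolding g_def gt_def a_def[symmetric] by linarith
  qed
  define z where "z = (\<lambda>n::nat. if n < m then (real n / N) powr \<beta> else (N / real n) powr \<beta>)"
  define e where "e = (\<lambda>n::nat. if n < m then \<beta> * ln N - \<beta> * ln (real n) else 0)"
  have zprop: "0 \<le> z n \<and> z n < 1" if "n \<in> F" for n
  proof (cases "n < m")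
    case True
    have "real n < N" using True mN by linarith
    then have "(real n / N) powr \<beta> < 1 powr \<beta>" using N0 b by (intro powr_less_mono2) auto
    then show ?thesis using True unfolding z_def by simp
  next
    case False
    then have n2: "n > Suc m" using that unfolding F_def F1_def F2_def by auto
    then have "N < real n" using Nm by linarith
    then have "(N / real n) powr \<beta> < 1 powr \<beta>" using N0 b by (intro powr_less_mono2) auto
    then show ?thesis using False unfolding z_def by simp
  qed
  have termF: "g n \<ge> e n + ln (1 - z n) - 1 / (2 * (real n powr \<beta>)^2)" if n: "n \<in> F" for n
  proof -
    define a where "a = real n powr \<beta>"
    have n1: "n \<ge> 1" using n unfolding F_def F1_def F2_def by auto
    have a0: "a > 0" unfolding a_def using n1 by simp
    have zz: "1 - z n > 0" using zprop[OF n] by simp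
    have key: "ln \<bar>a - x\<bar> - ln a = e n + ln (1 - z n)"
    proof (cases "n < m")
      case True
      have "real n < N" using True mN by linarith
      then have "real n powr \<beta> < N powr \<beta>" using b by (intro powr_less_mono2) auto
      then have "a < x" unfolding a_def using Nb by simp
      have za: "z n = a / x" unfolding z_def a_def using True Nb by (simp add: powr_divide)
      have "\<bar>a - x\<bar> = x * (1 - z n)" using \<open>a < x\<close> x unfolding za by (simp add: field_simps)
      then have "ln \<bar>a - x\<bar> = ln x + ln (1 - z n)" using x zz by (simp add: ln_mult)
      moreover have "ln x = \<beta> * ln N" using Nb by (metis ln_powr)
      moreover have "ln a = \<beta> * ln (real n)" unfolding a_def by simp
      ultimately show ?thesis unfolding e_def using True by simp
    next
      case False
      then have n2: "n > Suc m" using n unfolding F_def F1_def F2_def by auto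
      then have "N < real n" using Nm by linarith
      then have "N powr \<beta> < real n powr \<beta>" using b N0 by (intro powr_less_mono2) auto
      then have "x < a" unfolding a_def using Nb by simp
      have za: "z n = x / a" unfolding z_def a_def using False Nb by (simp add: powr_divide)
      have "\<bar>a - x\<bar> = a * (1 - z n)" using \<open>x < a\<close> a0 unfolding za by (simp add: field_simps)
      then have "ln \<bar>a - x\<bar> = ln a + ln (1 - z n)" using a0 zz by (simp add: ln_mult)
      then show ?thesis unfolding e_def using False by simp
    qed
    have ax: "a \<noteq> x"
    proof (cases "n < m")
      case True
      have "real n < N" using True mN by linarith
      then have "real n powr \<beta> < N powr \<beta>" using b by (intro powr_less_mono2) auto
      then show ?thesis unfolding a_def using Nb by simp
    next
      case False
      then have n2: "n > Suc m" using n unfolding F_def F1_def F2_def by auto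
      then have "N < real n" using Nm by linarith
      then have "N powr \<beta> < real n powr \<beta>" using b N0 by (intro powr_less_mono2) auto
      then show ?thesis unfolding a_def using Nb by simp
    qed
    have "ln (sqrt ((a - x)^2 + 1)) \<ge> ln \<bar>a - x\<bar>" using ax by (intro lsq_lower) auto
    moreover have "ln (sqrt (a^2 + 1)) \<le> ln a + 1 / (2 * a^2)" using a0 by (rule lsq_upper)
    ultimately show ?thesis using key unfolding g_def gt_def a_def[symmetric] by simp
  qed
  have sumF: "(\<Sum>n\<in>F. g n) \<ge> (\<Sum>n\<in>F. e n) + (\<Sum>n\<in>F. ln (1 - z n)) - (\<Sum>n\<in>F. 1 / (2 * (real n powr \<beta>)^2))"
  proof -
    have "(\<Sum>n\<in>F. g n) \<ge> (\<Sum>n\<in>F. e n + ln (1 - z n) - 1 / (2 * (real n powr \<beta>)^2))"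
      by (rule sum_mono) (use termF in auto)
    then show ?thesis by (simp add: sum.distrib sum_subtractf)
  qed
  have rec: "(\<Sum>n\<in>F. 1 / (2 * (real n powr \<beta>)^2)) \<le> 1"
  proof -
    have "F \<subseteq> {1..M}" using dec by auto
    then have "(\<Sum>n\<in>F. 1 / (2 * (real n powr \<beta>)^2)) \<le> (\<Sum>n\<in>{1..M}. 1 / (2 * (real n powr \<beta>)^2))"
      by (intro sum_mono2) auto
    also have "\<dots> \<le> 1" using b by (rule recip_sq)
    finally show ?thesis .
  qed
  have DB: "summable (\<lambda>k. w k / real k)" using Dbound[OF b] unfolding w_def by simp
  have zsum: "(\<Sum>n\<in>F. z n ^ k) \<le> N * w k" if k: "k \<ge> 1" for k
  proof -
    define p where "p = \<beta> * real k"
    have "real k \<ge> 1" using k by simp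
    then have bk: "\<beta> * 1 \<le> \<beta> * real k" using b by (intro mult_left_mono) auto
    have p1: "p > 1" unfolding p_def using b bk by linarith

    have s1: "(\<Sum>n\<in>F1. z n ^ k) = (\<Sum>n\<in>F1. (real n / N) powr p)"
    proof (rule sum.cong)
      fix n assume "n \<in> F1"
      then have "n < m" "n \<ge> 1" unfolding F1_def by auto
      then show "z n ^ k = (real n / N) powr p" unfolding z_def p_def using N0 by (simp add: zpow)
    qed simp
    have s2: "(\<Sum>n\<in>F2. z n ^ k) = (\<Sum>n\<in>F2. (N / real n) powr p)"
    proof (rule sum.cong)
      fix n assume "n \<in> F2"
      then have "\<not> n < m" "n \<ge> 1" unfolding F2_def by auto
      then show "z n ^ k = (N / real n) powr p" unfolding z_def p_def using N0 by (simp add: zpow)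
    qed simp
    have "(\<Sum>n\<in>F. z n ^ k) = (\<Sum>n\<in>F1. z n ^ k) + (\<Sum>n\<in>F2. z n ^ k)"
      unfolding F_def using disj by (intro sum.union_disjoint) (auto simp: F1_def F2_def)
    also have "\<dots> = (\<Sum>n\<in>F1. (real n / N) powr p) + (\<Sum>n\<in>F2. (N / real n) powr p)"
      using s1 s2 by simp
    also have "\<dots> \<le> N / (p+1) + N / (p-1)"
      unfolding F1_def F2_def
      by (intro add_mono F1_pow F2_pow) (use p1 m1 mN N0 Nm in auto)
    also have "\<dots> = N * w k" unfolding w_def p_def by (simp add: field_simps)
    finally show ?thesis .
  qed
  have serF: "(\<Sum>n\<in>F. ln (1 - z n)) \<ge> - (N * D)"
    unfolding D_def by (rule ser) (use finF zprop zsum DB in auto)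
  have eF: "(\<Sum>n\<in>F. e n) \<ge> \<beta> * (N - 2 - ln N)"
  proof -
    have "(\<Sum>n\<in>F. e n) = (\<Sum>n\<in>F1. e n) + (\<Sum>n\<in>F2. e n)"
      unfolding F_def using disj by (intro sum.union_disjoint) (auto simp: F1_def F2_def)
    also have "(\<Sum>n\<in>F2. e n) = 0" unfolding e_def F2_def by (intro sum.neutral) auto
    also have "(\<Sum>n\<in>F1. e n) = (\<Sum>n\<in>F1. \<beta> * ln N - \<beta> * ln (real n))"
      unfolding e_def F1_def by (intro sum.cong) auto
    also have "\<dots> = real (m-1) * \<beta> * ln N - \<beta> * (\<Sum>n\<in>{1..m-1}. ln (real n))"
      unfolding F1_def by (simp add: sum_subtractf sum_distrib_left)
    finally have A: "(\<Sum>n\<in>F. e n) = real (m-1) * \<beta> * ln N - \<beta> * (\<Sum>n\<in>{1..m-1}. ln (real n))" by simp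
    have B: "(\<Sum>n\<in>{1..m-1}. ln (real n)) \<le> real m * ln (real m) - (real m - 1)"
      using ln_sum_upper[of "m-1"] m1 by (simp add: of_nat_diff)
    have C: "ln (real m) \<le> ln N" using m1 mN by simp
    have C': "real m * ln (real m) \<le> real m * ln N" using C by (intro mult_left_mono) auto
    have rm: "real (m-1) = real m - 1" using m1 by (simp add: of_nat_diff)
    have "\<beta> * (\<Sum>n\<in>{1..m-1}. ln (real n)) \<le> \<beta> * (real m * ln (real m) - (real m - 1))"
      using B b by (intro mult_left_mono) auto
    moreover have "\<beta> * (real m * ln (real m)) \<le> \<beta> * (real m * ln N)"
      by (rule mult_left_mono[OF C']) (use b in simp)
    moreover have "\<beta> * (real m - 1 - ln N) \<ge> \<beta> * (N - 2 - ln N)"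
      using Nm b by (intro mult_left_mono) auto
    ultimately show ?thesis unfolding A rm by (simp add: algebra_simps)
  qed
  have "g m + g (Suc m) \<ge> - 2 * ln (2 powr \<beta> * x + 1)" using mid[of m] mid[of "Suc m"] by simp
  then show ?thesis
    using split sumF rec serF eF unfolding g_def N_def D_def by linarith
qed



lemma sums_lower:
  fixes g :: "nat \<Rightarrow> real"
  assumes "(\<lambda>k. g (Suc k)) sums s" "\<And>M. M \<ge> M0 \<Longrightarrow> B \<le> (\<Sum>n\<in>{1..M}. g n)"
  shows "B \<le> s"
proof -
  have "(\<lambda>M. \<Sum>k<M. g (Suc k)) \<longlonglongrightarrow> s" using assms(1) by (simp add: sums_def)
  moreover have "(\<Sum>k<M. g (Suc k)) = (\<Sum>n\<in>{1..M}. g n)" for M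
    using sum.atLeast1_atMost_eq[of g M] by simp
  ultimately have "(\<lambda>M. \<Sum>n\<in>{1..M}. g n) \<longlonglongrightarrow> s" by simp
  then show ?thesis by (rule LIMSEQ_le_const) (use assms(2) in blast)
qed

lemma sums_upper:
  fixes g :: "nat \<Rightarrow> real"
  assumes "(\<lambda>k. g (Suc k)) sums s" "\<And>M. (\<Sum>n\<in>{1..M}. g n) \<le> B"
  shows "s \<le> B"
proof -
  have "(\<lambda>M. \<Sum>k<M. g (Suc k)) \<longlonglongrightarrow> s" using assms(1) by (simp add: sums_def)
  moreover have "(\<Sum>k<M. g (Suc k)) = (\<Sum>n\<in>{1..M}. g n)" for M
    using sum.atLeast1_atMost_eq[of g M] by simp
  ultimately have "(\<lambda>M. \<Sum>n\<in>{1..M}. g n) \<longlonglongrightarrow> s" by simp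
  then show ?thesis by (rule LIMSEQ_le_const2) (use assms(2) in blast)
qed

lemma powr_inv_ge:
  fixes \<beta> y R :: real
  assumes "\<beta> > 0" "y > 0" "R \<ge> y powr \<beta>"
  shows "R powr (1/\<beta>) \<ge> y"
proof -
  have "(y powr \<beta>) powr (1/\<beta>) \<le> R powr (1/\<beta>)" using assms by (intro powr_mono2) auto
  moreover have "(y powr \<beta>) powr (1/\<beta>) = y" using assms by (simp add: powr_powr)
  ultimately show ?thesis by simp
qed

theorem lemma5p2:
  fixes \<beta> :: real
  assumes "\<beta> > 2"
  shows "\<exists>C1 C2 R. 0 < C1 \<and> C1 \<le> C2 \<and> R > 0 \<and>
    (\<forall>x::real. \<bar>x\<bar> > R \<longrightarrow>
       C1 * \<bar>x\<bar> powr (1 / \<beta>) \<le> ln (cmod (E_beta \<beta> (complex_of_real x))) \<and>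
       ln (cmod (E_beta \<beta> (complex_of_real x))) \<le> C2 * \<bar>x\<bar> powr (1 / \<beta>))"
proof -
  note b = assms
  define w where "w = (\<lambda>k::nat. 1 / (\<beta> * real k + 1) + 1 / (\<beta> * real k - 1))"
  define D where "D = (\<Sum>k. w k / real k)"
  define \<eta> where "\<eta> = 2*\<beta>/3 - 2*\<beta>/(\<beta>^2 - 1)"
  have Dle: "D \<le> \<beta> - \<eta>" using Dbound[OF b] unfolding D_def w_def \<eta>_def by simp
  have \<eta>0: "\<eta> > 0"
  proof -
    have "2*2 < \<beta>*\<beta>" using b by (intro mult_strict_mono) auto
    then have "\<beta>^2 - 1 > 3" by (simp add: power2_eq_square)
    then have "2*\<beta>/(\<beta>^2 - 1) < 2*\<beta>/3" using b by (intro divide_strict_left_mono) auto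
    then show ?thesis unfolding \<eta>_def by simp
  qed
  define A1 where "A1 = 2*\<beta> + 1 + 2*(\<beta>+1)*ln 2"
  obtain N0 where N0: "N0 > 0" "\<forall>N\<ge>N0. A1 + (3*\<beta>) * ln N \<le> (\<eta>/2) * N"
    using ev_lin_log[of "\<eta>/2" A1 "3*\<beta>"] \<eta>0 by auto
  obtain T0 :: real where T0: "T0 > 0" "\<forall>T\<ge>T0. (ln 2 + 1) + 0 * ln T \<le> (ln 2/2) * T"
    using ev_lin_log[of "ln 2/2::real" "ln 2 + 1" 0] by auto
  define C1 where "C1 = min (\<eta>/2) (ln 2/2)"
  define C2' where "C2' = ln 2 + \<beta> + 2 powr (\<beta>-1)/(\<beta>-1)"
  define C2 where "C2 = max C2' C1"
  define R where "R = max (2 powr \<beta>) (max (N0 powr \<beta>) (T0 powr \<beta>))"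
  have R1: "R \<ge> 2 powr \<beta>" unfolding R_def by simp
  have R2: "2 powr \<beta> \<ge> 1" using b by (intro ge_one_powr_ge_zero) auto
  have C10: "C1 > 0" unfolding C1_def using \<eta>0 by simp
  have main: "C1 * \<bar>x\<bar> powr (1 / \<beta>) \<le> ln (cmod (E_beta \<beta> (complex_of_real x))) \<and>
       ln (cmod (E_beta \<beta> (complex_of_real x))) \<le> C2 * \<bar>x\<bar> powr (1 / \<beta>)" if x: "\<bar>x\<bar> > R" for x
  proof -
    define S where "S = \<bar>x\<bar> powr (1/\<beta>)"
    have xR: "\<bar>x\<bar> \<ge> 1" using x R1 R2 by linarith
    have S2: "S \<ge> 2" unfolding S_def using b x R1 by (intro powr_inv_ge) auto
    have SN0: "S \<ge> N0" unfolding S_def using b x N0(1) unfolding R_def by (intro powr_inv_ge) auto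
    have ST0: "S \<ge> T0" unfolding S_def using b x T0(1) unfolding R_def by (intro powr_inv_ge) auto
    have Sb: "S powr \<beta> = \<bar>x\<bar>" unfolding S_def using b by (simp add: powr_powr)
    have es: "(\<lambda>k. gt \<beta> x (Suc k)) sums ln (cmod (E_beta \<beta> (complex_of_real x)))"
      by (rule E_sums[OF b])
    have up: "ln (cmod (E_beta \<beta> (complex_of_real x))) \<le> C2' * S"
      by (rule sums_upper[OF es]) (use upper_est[OF b xR] in \<open>simp add: C2'_def S_def\<close>)
    have lo: "C1 * S \<le> ln (cmod (E_beta \<beta> (complex_of_real x)))"
    proof (cases "x > 0")
      case True
      then have xa: "\<bar>x\<bar> = x" by simp
      have "C1 * S \<le> \<beta> * (S - 2 - ln S) - S * D - 1 - 2 * ln (2 powr \<beta> * x + 1)"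
      proof -
        have l1: "ln (2 powr \<beta> * x + 1) \<le> (\<beta>+1) * ln 2 + \<beta> * ln S"
        proof -
          have "2 powr \<beta> * x \<ge> 1" using R2 xR xa by (metis mult_mono' one_le_numeral order_trans mult_1_left zero_le_one)
          then have "2 powr \<beta> * x + 1 \<le> 2 * (2 powr \<beta> * x)" by linarith
          moreover have "2 powr \<beta> * x + 1 > 0" using True by (simp add: add_pos_pos)
          ultimately have "ln (2 powr \<beta> * x + 1) \<le> ln (2 * (2 powr \<beta> * x))"
            by (subst ln_le_cancel_iff) auto
          also have "\<dots> = ln 2 + \<beta> * ln 2 + ln x" using True by (simp add: ln_mult)
          also have "ln x = \<beta> * ln S" using Sb xa by (metis ln_powr)
          finally show ?thesis by (simp add: algebra_simps)
        qed
        have l2: "S * D \<le> S * (\<beta> - \<eta>)" using Dle S2 by (intro mult_left_mono) auto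
        have l3: "A1 + (3*\<beta>) * ln S \<le> (\<eta>/2) * S" using N0(2) SN0 by blast
        have l4: "ln S \<ge> 0" using S2 by simp
        have l5: "C1 * S \<le> (\<eta>/2) * S" unfolding C1_def using S2 by (intro mult_right_mono) auto
        show ?thesis using l1 l2 l3 l4 l5 unfolding A1_def by (simp add: algebra_simps)
      qed
      also have "\<dots> \<le> ln (cmod (E_beta \<beta> (complex_of_real x)))"
      proof (rule sums_lower[OF es])
        fix M assume "M \<ge> Suc (nat \<lfloor>x powr (1/\<beta>)\<rfloor>)"
        then show "\<beta> * (S - 2 - ln S) - S * D - 1 - 2 * ln (2 powr \<beta> * x + 1) \<le> (\<Sum>n\<in>{1..M}. gt \<beta> x n)"
          using lower_pos[OF b True, of M] S2 unfolding S_def D_def w_def xa by simp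
      qed
      finally show ?thesis .
    next
      case False
      then have xa: "x = - \<bar>x\<bar>" by simp
      have "C1 * S \<le> real (nat \<lfloor>S\<rfloor>) * ln 2 - 1"
      proof -
        have "S < real (nat \<lfloor>S\<rfloor>) + 1" using floor_facts[of S] S2 by simp
        then have "(S - 1) * ln 2 \<le> real (nat \<lfloor>S\<rfloor>) * ln 2" by (intro mult_right_mono) auto
        moreover have "(ln 2 + 1) + 0 * ln S \<le> (ln 2/2) * S" using T0(2) ST0 by blast
        moreover have "C1 * S \<le> (ln 2/2) * S" unfolding C1_def using S2 by (intro mult_right_mono) auto
        ultimately show ?thesis by (simp add: algebra_simps)
      qed
      also have "\<dots> \<le> ln (cmod (E_beta \<beta> (complex_of_real x)))"
      proof (rule sums_lower[OF es])
        fix M assume "M \<ge> nat \<lfloor>\<bar>x\<bar> powr (1/\<beta>)\<rfloor>"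
        then show "real (nat \<lfloor>S\<rfloor>) * ln 2 - 1 \<le> (\<Sum>n\<in>{1..M}. gt \<beta> x n)"
          using lower_neg[OF b xR, of M] unfolding S_def by (subst xa) simp
      qed
      finally show ?thesis .
    qed
    have "C2' * S \<le> C2 * S" unfolding C2_def using S2 by (intro mult_right_mono) auto
    then show ?thesis using up lo unfolding S_def by simp
  qed
  have "R > 0" using R1 R2 by linarith
  moreover have "C1 \<le> C2" unfolding C2_def by simp
  ultimately show ?thesis using C10 main by blast
qed


end
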